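(* Let $f:D\to\{0,1\}$, $D\subseteq\{0,1\}^n$, be an $n$-bit partial Boolean function that depends on $n$ bits. Then $f$ can be computed exactly by a quantum 1-query algorithm if and only if either $n=1$, $D=\{0,1\}$ and $f(x)=x_1$ or $f(x)=1\oplus x_1$; or $n=2$, $D\subseteq\{0,1\}^2$ with $|D|\in\{3,4\}$, and $f(x)=x_1\oplus x_2$ or $f(x)=1\oplus x_1\oplus x_2$ for all $x\in D$.
   Context: An $n$-bit partial Boolean function is a map $f:D\to\{0,1\}$ with $D\subseteq\{0,1\}^n$. A multilinear polynomial $p$ in $x_1,\dots,x_n$ represents $f$ if $p(x)=f(x)$ for all $x\in D$. $f$ depends on $k$ bits if $k$ is the minimum, over all multilinear polynomials representing $f$, of the number of variables occurring in the polynomial. A quantum 1-query algorithm works in a finite-dimensional Hilbert space with orthonormal basis $\{|i,j'\rangle\}$, $i\in\{0,1,\dots,n\}$, $j'$ in a finite set; for input $x$ the oracle is $O_x|i,j'\rangle=(-1)^{x_i}|i,j'\rangle$ for $i\ge1$ and $O_x|0,j'\rangle=|0,j'\rangle$. The algorithm applies input-independent unitaries $U_0$, then $O_x$, then $U_1$ to an initial state $|\psi_0\rangle$ and performs a projective measurement with outcomes in $\{0,1\}$; it computes $f$ exactly if for every $x\in D$ the outcome is $f(x)$ with probability 1. *)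

theory Defs
  imports "HOL-Analysis.Analysis"
begin

text \<open>An input x in {0,1}^n is a function nat => bool whose bits are x 1, ..., x n
  (True = 1); canonically all other positions are False.\<close>

definition cube :: "nat \<Rightarrow> (nat \<Rightarrow> bool) set" where
  "cube n = {x. \<forall>i. x i \<longrightarrow> i \<in> {1..n}}"

text \<open>A multilinear polynomial in x_1..x_n with real coefficients is given by its
  coefficient function c on subsets S of {1..n} (monomial prod_{i in S} x_i).\<close>

definition peval :: "nat \<Rightarrow> (nat set \<Rightarrow> real) \<Rightarrow> (nat \<Rightarrow> bool) \<Rightarrow> real" where
  "peval n c x = (\<Sum>S\<in>Pow {1..n}. c S * (\<Prod>i\<in>S. (if x i then 1 else 0)))"

definition pvars :: "nat \<Rightarrow> (nat set \<Rightarrow> real) \<Rightarrow> nat set" where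
  "pvars n c = \<Union>{S \<in> Pow {1..n}. c S \<noteq> 0}"

definition represents :: "nat \<Rightarrow> (nat \<Rightarrow> bool) set \<Rightarrow> ((nat \<Rightarrow> bool) \<Rightarrow> bool)
    \<Rightarrow> (nat set \<Rightarrow> real) \<Rightarrow> bool" where
  "represents n D f c \<longleftrightarrow> (\<forall>x\<in>D. peval n c x = (if f x then 1 else 0))"

definition dep_bits :: "nat \<Rightarrow> (nat \<Rightarrow> bool) set \<Rightarrow> ((nat \<Rightarrow> bool) \<Rightarrow> bool) \<Rightarrow> nat" where
  "dep_bits n D f = (LEAST k. \<exists>c. represents n D f c \<and> card (pvars n c) = k)"

text \<open>Hilbert space with orthonormal basis |i,j> , i in {0..n}, j in {0..<m}
  (any finite set J is in bijection with some {0..<m}).\<close>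

type_synonym qidx = "nat \<times> nat"
type_synonym qvec = "qidx \<Rightarrow> complex"
type_synonym qop = "qidx \<Rightarrow> qidx \<Rightarrow> complex"

definition qI :: "nat \<Rightarrow> nat \<Rightarrow> qidx set" where
  "qI n m = {0..n} \<times> {0..<m}"

definition qapply :: "qidx set \<Rightarrow> qop \<Rightarrow> qvec \<Rightarrow> qvec" where
  "qapply I A v = (\<lambda>a. \<Sum>b\<in>I. A a b * v b)"

definition qnorm2 :: "qidx set \<Rightarrow> qvec \<Rightarrow> real" where
  "qnorm2 I v = (\<Sum>a\<in>I. (cmod (v a))\<^sup>2)"

definition unitary_on :: "qidx set \<Rightarrow> qop \<Rightarrow> bool" where
  "unitary_on I U \<longleftrightarrow>
     (\<forall>a\<in>I. \<forall>b\<in>I. (\<Sum>k\<in>I. cnj (U k a) * U k b) = (if a = b then 1 else 0))"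

definition projector_on :: "qidx set \<Rightarrow> qop \<Rightarrow> bool" where
  "projector_on I P \<longleftrightarrow>
     (\<forall>a\<in>I. \<forall>b\<in>I. P a b = cnj (P b a)) \<and>
     (\<forall>a\<in>I. \<forall>b\<in>I. (\<Sum>k\<in>I. P a k * P k b) = P a b)"

definition proj_meas :: "qidx set \<Rightarrow> qop \<Rightarrow> qop \<Rightarrow> bool" where
  "proj_meas I P0 P1 \<longleftrightarrow> projector_on I P0 \<and> projector_on I P1 \<and>
     (\<forall>a\<in>I. \<forall>b\<in>I. P0 a b + P1 a b = (if a = b then 1 else 0))"

definition query_op :: "(nat \<Rightarrow> bool) \<Rightarrow> qop" where
  "query_op x = (\<lambda>a b. if a = b then (if fst a \<ge> 1 \<and> x (fst a) then -1 else 1) else 0)"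

definition final_state :: "nat \<Rightarrow> nat \<Rightarrow> qvec \<Rightarrow> qop \<Rightarrow> qop \<Rightarrow> (nat \<Rightarrow> bool) \<Rightarrow> qvec" where
  "final_state n m psi0 U0 U1 x =
     qapply (qI n m) U1 (qapply (qI n m) (query_op x) (qapply (qI n m) U0 psi0))"

definition computes_exactly_1query ::
  "nat \<Rightarrow> (nat \<Rightarrow> bool) set \<Rightarrow> ((nat \<Rightarrow> bool) \<Rightarrow> bool) \<Rightarrow> bool" where
  "computes_exactly_1query n D f \<longleftrightarrow>
     (\<exists>m psi0 U0 U1 P0 P1.
        qnorm2 (qI n m) psi0 = 1 \<and>
        unitary_on (qI n m) U0 \<and> unitary_on (qI n m) U1 \<and>
        proj_meas (qI n m) P0 P1 \<and>
        (\<forall>x\<in>D. qnorm2 (qI n m)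
                  (qapply (qI n m) (if f x then P1 else P0) (final_state n m psi0 U0 U1 x)) = 1))"

end

theory Submission
  imports Defs
begin


definition ip :: "qidx set \<Rightarrow> qvec \<Rightarrow> qvec \<Rightarrow> complex" where
  "ip I u w = (\<Sum>a\<in>I. cnj (u a) * w a)"

lemma ip_cong: "(\<And>a. a \<in> I \<Longrightarrow> u a = u' a) \<Longrightarrow> (\<And>a. a \<in> I \<Longrightarrow> w a = w' a) \<Longrightarrow> ip I u w = ip I u' w'"
  unfolding ip_def by (rule sum.cong) auto

lemma qapply_cong: "(\<And>b. b \<in> I \<Longrightarrow> u b = w b) \<Longrightarrow> qapply I A u = qapply I A w"
  unfolding qapply_def by (intro ext sum.cong) auto

lemma qnorm2_ip: "complex_of_real (qnorm2 I u) = ip I u u"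
  unfolding qnorm2_def ip_def of_real_sum
  by (rule sum.cong) (simp_all add: complex_norm_square[symmetric] mult.commute)

lemma unitary_ip:
  assumes "unitary_on I U" and fin: "finite I"
  shows "ip I (qapply I U u) (qapply I U w) = ip I u w"
proof -
  have "ip I (qapply I U u) (qapply I U w) =
      (\<Sum>a\<in>I. \<Sum>b\<in>I. \<Sum>c\<in>I. cnj (u b) * w c * (cnj (U a b) * U a c))"
    by (simp add: ip_def qapply_def sum_distrib_left sum_distrib_right mult_ac)
  also have "\<dots> = (\<Sum>b\<in>I. \<Sum>c\<in>I. \<Sum>a\<in>I. cnj (u b) * w c * (cnj (U a b) * U a c))"
    by (subst sum.swap, rule sum.cong[OF refl], rule sum.swap)
  also have "\<dots> = (\<Sum>b\<in>I. \<Sum>c\<in>I. cnj (u b) * w c * (if b = c then 1 else 0))"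
    using assms unfolding unitary_on_def by (simp add: sum_distrib_left[symmetric])
  also have "\<dots> = (\<Sum>b\<in>I. \<Sum>c\<in>I. if b = c then cnj (u b) * w b else 0)"
    by (intro sum.cong refl) simp
  also have "\<dots> = ip I u w"
    using fin by (simp add: ip_def)
  finally show ?thesis .
qed

lemma proj_idem:
  assumes "projector_on I P" "a \<in> I"
  shows "qapply I P (qapply I P w) a = qapply I P w a"
proof -
  have "qapply I P (qapply I P w) a = (\<Sum>b\<in>I. \<Sum>c\<in>I. P a b * P b c * w c)"
    by (simp add: qapply_def sum_distrib_left mult_ac)
  also have "\<dots> = (\<Sum>c\<in>I. (\<Sum>b\<in>I. P a b * P b c) * w c)"
    unfolding sum_distrib_right by (rule sum.swap)
  also have "\<dots> = qapply I P w a"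
  proof -
    have h: "\<forall>c\<in>I. (\<Sum>b\<in>I. P a b * P b c) = P a c"
      using assms unfolding projector_on_def by blast
    show ?thesis unfolding qapply_def by (intro sum.cong refl) (simp add: h)
  qed
  finally show ?thesis .
qed

lemma proj_adj:
  assumes "projector_on I P"
  shows "ip I (qapply I P u) w = ip I u (qapply I P w)"
proof -
  have "ip I (qapply I P u) w = (\<Sum>a\<in>I. \<Sum>b\<in>I. cnj (u b) * (cnj (P a b) * w a))"
    by (simp add: ip_def qapply_def sum_distrib_left sum_distrib_right mult_ac)
  also have "\<dots> = (\<Sum>a\<in>I. \<Sum>b\<in>I. cnj (u b) * (P b a * w a))"
  proof -
    have h: "\<And>a b. a \<in> I \<Longrightarrow> b \<in> I \<Longrightarrow> cnj (P a b) = P b a"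
      using assms unfolding projector_on_def by (metis complex_cnj_cnj)
    show ?thesis by (intro sum.cong refl) (simp add: h)
  qed
  also have "\<dots> = ip I u (qapply I P w)"
    unfolding ip_def qapply_def sum_distrib_left by (rule sum.swap)
  finally show ?thesis .
qed

lemma meas_sum:
  assumes "proj_meas I P0 P1" "a \<in> I" "finite I"
  shows "qapply I P0 w a + qapply I P1 w a = w a"
proof -
  have "qapply I P0 w a + qapply I P1 w a = (\<Sum>b\<in>I. (P0 a b + P1 a b) * w b)"
    by (simp add: qapply_def sum.distrib distrib_right)
  also have "\<dots> = (\<Sum>b\<in>I. (if a = b then w b else 0))"
    using assms unfolding proj_meas_def by (intro sum.cong refl) simp
  also have "\<dots> = w a" using assms by simp
  finally show ?thesis .
qed

lemma ip_zero: "(\<And>a. a \<in> I \<Longrightarrow> w a = 0) \<Longrightarrow> ip I u w = 0"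
  unfolding ip_def by simp

lemma qnorm2_zero: assumes "finite I" "qnorm2 I u = 0" "a \<in> I" shows "u a = 0"
proof -
  have "\<forall>b\<in>I. (cmod (u b))\<^sup>2 = 0"
    using assms sum_nonneg_eq_0_iff[of I "\<lambda>b. (cmod (u b))\<^sup>2"] unfolding qnorm2_def by simp
  then show ?thesis using assms by simp
qed

lemma norm_split:
  assumes "proj_meas I P0 P1" "finite I"
  shows "qnorm2 I (qapply I P0 s) + qnorm2 I (qapply I P1 s) = qnorm2 I s"
proof -
  have p0: "projector_on I P0" and p1: "projector_on I P1" using assms by (auto simp: proj_meas_def)
  have "ip I (qapply I P0 s) (qapply I P0 s) = ip I s (qapply I P0 s)"
    by (simp add: proj_adj[OF p0] ip_cong[OF refl proj_idem[OF p0]])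
  moreover have "ip I (qapply I P1 s) (qapply I P1 s) = ip I s (qapply I P1 s)"
    by (simp add: proj_adj[OF p1] ip_cong[OF refl proj_idem[OF p1]])
  moreover have "ip I s (qapply I P0 s) + ip I s (qapply I P1 s) = ip I s s"
    unfolding ip_def sum.distrib[symmetric] distrib_left[symmetric]
    using meas_sum[OF assms(1) _ assms(2)] by simp
  ultimately have "complex_of_real (qnorm2 I (qapply I P0 s) + qnorm2 I (qapply I P1 s)) = complex_of_real (qnorm2 I s)"
    by (simp add: qnorm2_ip)
  then show ?thesis using of_real_eq_iff by blast
qed

lemma meas_orth:
  assumes pm: "proj_meas I P0 P1" and fin: "finite I"
    and "qnorm2 I s = 1" "qnorm2 I (qapply I P0 s) = 1"
    and "qnorm2 I t = 1" "qnorm2 I (qapply I P1 t) = 1"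
  shows "ip I s t = 0"
proof -
  have p0: "projector_on I P0" and p1: "projector_on I P1" using assms by (auto simp: proj_meas_def)
  have "qnorm2 I (qapply I P1 s) = 0" using norm_split[OF pm fin, of s] assms by simp
  hence z1: "\<And>a. a \<in> I \<Longrightarrow> qapply I P1 s a = 0" using qnorm2_zero[OF fin] by metis
  have "qnorm2 I (qapply I P0 t) = 0" using norm_split[OF pm fin, of t] assms by simp
  hence z0: "\<And>a. a \<in> I \<Longrightarrow> qapply I P0 t a = 0" using qnorm2_zero[OF fin] by metis
  have "ip I s t = ip I s (qapply I P0 t) + ip I s (qapply I P1 t)"
    unfolding ip_def sum.distrib[symmetric] distrib_left[symmetric]
    using meas_sum[OF pm _ fin] by simp
  moreover have "ip I s (qapply I P0 t) = 0" by (rule ip_zero) (rule z0)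
  moreover have "ip I s (qapply I P1 t) = ip I (qapply I P1 s) t" by (rule proj_adj[OF p1, symmetric])
  moreover have "ip I (qapply I P1 s) t = 0" unfolding ip_def using z1 by simp
  ultimately show ?thesis by simp
qed


definition sg :: "(nat \<Rightarrow> bool) \<Rightarrow> nat \<Rightarrow> real" where
  "sg x i = (if 1 \<le> i \<and> x i then -1 else 1)"

lemma sg_sq: "sg x i * sg x i = 1" by (simp add: sg_def)

lemma query_apply:
  assumes "a \<in> I" "finite I"
  shows "qapply I (query_op x) v a = complex_of_real (sg x (fst a)) * v a"
proof -
  have "qapply I (query_op x) v a = (\<Sum>b\<in>I. if a = b then complex_of_real (sg x (fst a)) * v a else 0)"
    unfolding qapply_def query_op_def sg_def by (intro sum.cong refl) auto
  also have "\<dots> = complex_of_real (sg x (fst a)) * v a" using assms by simp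
  finally show ?thesis .
qed

lemma cnjsq: "cnj z * z = complex_of_real ((cmod z)\<^sup>2)"
  by (subst complex_norm_square) (rule mult.commute)

lemma term_eq: "cnj (complex_of_real s * z) * (complex_of_real t * z) = complex_of_real (s * t * (cmod z)\<^sup>2)"
proof -
  have "cnj (complex_of_real s * z) * (complex_of_real t * z) = complex_of_real s * complex_of_real t * (cnj z * z)"
    by (simp add: mult_ac)
  also have "\<dots> = complex_of_real (s * t * (cmod z)\<^sup>2)" by (simp only: cnjsq of_real_mult)
  finally show ?thesis .
qed

lemma ip_query:
  assumes "finite I"
  shows "ip I (qapply I (query_op x) v) (qapply I (query_op y) v) =
     complex_of_real (\<Sum>a\<in>I. sg x (fst a) * sg y (fst a) * (cmod (v a))\<^sup>2)"
proof -
  have "ip I (qapply I (query_op x) v) (qapply I (query_op y) v) =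
     ip I (\<lambda>a. complex_of_real (sg x (fst a)) * v a) (\<lambda>a. complex_of_real (sg y (fst a)) * v a)"
    using assms by (intro ip_cong) (simp_all add: query_apply)
  also have "\<dots> = complex_of_real (\<Sum>a\<in>I. sg x (fst a) * sg y (fst a) * (cmod (v a))\<^sup>2)"
    unfolding ip_def of_real_sum
    by (intro sum.cong refl) (rule term_eq)
  finally show ?thesis .
qed

lemma block_sum:
  "(\<Sum>a\<in>qI n m. g (fst a) * (h a :: real)) = (\<Sum>i=0..n. g i * (\<Sum>j\<in>{0..<m}. h (i, j)))"
proof -
  have "(\<Sum>i=0..n. g i * (\<Sum>j\<in>{0..<m}. h (i, j))) = (\<Sum>i=0..n. \<Sum>j\<in>{0..<m}. g i * h (i, j))"
    by (simp add: sum_distrib_left)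
  also have "\<dots> = (\<Sum>(i,j)\<in>{0..n}\<times>{0..<m}. g i * h (i, j))" by (rule sum.cartesian_product)
  also have "\<dots> = (\<Sum>a\<in>qI n m. g (fst a) * h a)" unfolding qI_def by (intro sum.cong) auto
  finally show ?thesis by simp
qed

lemma finite_qI: "finite (qI n m)" by (simp add: qI_def)

lemma weights_pair:
  assumes pm: "proj_meas (qI n m) P0 P1" and u0: "unitary_on (qI n m) U0" and u1: "unitary_on (qI n m) U1"
    and nv: "(\<Sum>a\<in>qI n m. (cmod (qapply (qI n m) U0 psi0 a))\<^sup>2) = 1"
    and hx: "qnorm2 (qI n m) (qapply (qI n m) P0 (final_state n m psi0 U0 U1 x)) = 1"
    and hy: "qnorm2 (qI n m) (qapply (qI n m) P1 (final_state n m psi0 U0 U1 y)) = 1"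
  shows "(\<Sum>a\<in>qI n m. sg x (fst a) * sg y (fst a) * (cmod (qapply (qI n m) U0 psi0 a))\<^sup>2) = 0"
proof -
  let ?I = "qI n m"
  define v where "v = qapply ?I U0 psi0"
  have fs: "\<And>z. final_state n m psi0 U0 U1 z = qapply ?I U1 (qapply ?I (query_op z) v)"
    by (simp add: final_state_def v_def)
  have nrm: "\<And>z. qnorm2 ?I (final_state n m psi0 U0 U1 z) = 1"
  proof -
    fix z
    have "complex_of_real (qnorm2 ?I (final_state n m psi0 U0 U1 z)) =
       ip ?I (qapply ?I (query_op z) v) (qapply ?I (query_op z) v)"
      by (simp only: qnorm2_ip fs unitary_ip[OF u1 finite_qI])
    also have "\<dots> = complex_of_real (\<Sum>a\<in>?I. sg z (fst a) * sg z (fst a) * (cmod (v a))\<^sup>2)"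
      by (rule ip_query[OF finite_qI])
    also have "(\<Sum>a\<in>?I. sg z (fst a) * sg z (fst a) * (cmod (v a))\<^sup>2) = 1"
      using nv by (simp add: sg_sq v_def)
    finally show "qnorm2 ?I (final_state n m psi0 U0 U1 z) = 1" by simp
  qed
  have z: "ip ?I (final_state n m psi0 U0 U1 x) (final_state n m psi0 U0 U1 y) = 0"
    by (rule meas_orth[OF pm finite_qI nrm hx nrm hy])
  have "ip ?I (final_state n m psi0 U0 U1 x) (final_state n m psi0 U0 U1 y) =
      ip ?I (qapply ?I (query_op x) v) (qapply ?I (query_op y) v)"
    by (simp only: fs unitary_ip[OF u1 finite_qI])
  also have "\<dots> = complex_of_real (\<Sum>a\<in>?I. sg x (fst a) * sg y (fst a) * (cmod (v a))\<^sup>2)"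
    by (rule ip_query[OF finite_qI])
  finally have "complex_of_real (\<Sum>a\<in>?I. sg x (fst a) * sg y (fst a) * (cmod (v a))\<^sup>2) = 0"
    using z by simp
  hence "(\<Sum>a\<in>?I. sg x (fst a) * sg y (fst a) * (cmod (v a))\<^sup>2) = 0"
    by (simp only: of_real_eq_0_iff)
  thus ?thesis by (simp add: v_def)
qed

lemma weights:
  assumes "computes_exactly_1query n D f"
  shows "\<exists>q. (\<forall>i. 0 \<le> q i) \<and> (\<Sum>i=0..n. q i) = 1 \<and>
     (\<forall>x\<in>D. \<forall>y\<in>D. f x \<noteq> f y \<longrightarrow> (\<Sum>i=0..n. sg x i * sg y i * q i) = 0)"
proof -
  obtain m psi0 U0 U1 P0 P1 where n0: "qnorm2 (qI n m) psi0 = 1"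
    and u0: "unitary_on (qI n m) U0" and u1: "unitary_on (qI n m) U1"
    and pm: "proj_meas (qI n m) P0 P1"
    and ok: "\<forall>x\<in>D. qnorm2 (qI n m)
                  (qapply (qI n m) (if f x then P1 else P0) (final_state n m psi0 U0 U1 x)) = 1"
    using assms unfolding computes_exactly_1query_def by blast
  let ?I = "qI n m"
  define v where "v = qapply ?I U0 psi0"
  define q where "q i = (\<Sum>j\<in>{0..<m}. (cmod (v (i, j)))\<^sup>2)" for i
  have "complex_of_real (qnorm2 ?I v) = complex_of_real (qnorm2 ?I psi0)"
    by (simp only: qnorm2_ip v_def unitary_ip[OF u0 finite_qI])
  hence "qnorm2 ?I v = 1" using n0 by (simp only: of_real_eq_iff)
  hence nv: "(\<Sum>a\<in>?I. (cmod (v a))\<^sup>2) = 1" by (simp add: qnorm2_def)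
  have bs: "\<And>g. (\<Sum>a\<in>?I. g (fst a) * (cmod (v a))\<^sup>2) = (\<Sum>i=0..n. g i * q i)"
    unfolding q_def by (rule block_sum)
  have "(\<Sum>i=0..n. q i) = 1" using nv bs[of "\<lambda>_. 1"] by simp
  moreover have "\<forall>i. 0 \<le> q i" unfolding q_def by (simp add: sum_nonneg)
  moreover have "\<forall>x\<in>D. \<forall>y\<in>D. f x \<noteq> f y \<longrightarrow> (\<Sum>i=0..n. sg x i * sg y i * q i) = 0"
  proof (intro ballI impI)
    fix x y assume xD: "x \<in> D" and yD: "y \<in> D" and ne: "f x \<noteq> f y"
    have gen: "(\<Sum>i=0..n. sg a i * sg b i * q i) = 0" if "a \<in> D" "b \<in> D" "\<not> f a" "f b" for a b
    proof -
      have "(\<Sum>i=0..n. sg a i * sg b i * q i) = (\<Sum>c\<in>?I. sg a (fst c) * sg b (fst c) * (cmod (v c))\<^sup>2)"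
        using bs[of "\<lambda>i. sg a i * sg b i"] by simp
      also have "\<dots> = 0" unfolding v_def
        by (rule weights_pair[OF pm u0 u1 nv[unfolded v_def]]) (use ok that in auto)
      finally show ?thesis .
    qed
    show "(\<Sum>i=0..n. sg x i * sg y i * q i) = 0"
    proof (cases "f x")
      case True
      then show ?thesis using gen[OF yD xD] ne by (simp add: mult.commute)
    next
      case False
      then show ?thesis using gen[OF xD yD] ne by simp
    qed
  qed
  ultimately show ?thesis by blast
qed




lemma sum_Pow_insert:
  assumes "finite T" "a \<notin> T"
  shows "(\<Sum>A\<in>Pow (insert a T). h A) = (\<Sum>A\<in>Pow T. h A) + (\<Sum>A\<in>Pow T. h (insert a A))"
proof -
  have inj: "inj_on (insert a) (Pow T)"
    using assms(2) by (auto simp: inj_on_def)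
  have "(\<Sum>A\<in>Pow (insert a T). h A) = (\<Sum>A\<in>Pow T. h A) + (\<Sum>A\<in>insert a ` Pow T. h A)"
    unfolding Pow_insert using assms by (intro sum.union_disjoint) auto
  also have "(\<Sum>A\<in>insert a ` Pow T. h A) = (\<Sum>A\<in>Pow T. h (insert a A))"
    by (simp add: sum.reindex[OF inj])
  finally show ?thesis .
qed

lemma mobius:
  assumes "finite C"
  shows "(\<Sum>T\<in>Pow C. \<Sum>A\<in>Pow T. (-1::real) ^ card (T - A) * F A) = F C"
  using assms
proof (induction C arbitrary: F rule: finite_induct)
  case empty
  then show ?case by simp
next
  case (insert a C)
  have step: "(\<Sum>A\<in>Pow (insert a T). (-1::real) ^ card (insert a T - A) * F A) =
     (\<Sum>A\<in>Pow T. (-1::real) ^ card (T - A) * (F (insert a A) - F A))" if "T \<subseteq> C" for T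
  proof -
    have fT: "finite T" and aT: "a \<notin> T" using that insert by (auto intro: finite_subset)
    have c1: "card (insert a T - A) = Suc (card (T - A))" if "A \<subseteq> T" for A
    proof -
      have "insert a T - A = insert a (T - A)" using aT that by auto
      thus ?thesis using fT aT by simp
    qed
    have c2: "insert a T - insert a A = T - A" if "A \<subseteq> T" for A using aT that by auto
    show ?thesis
      unfolding sum_Pow_insert[OF fT aT] sum.distrib[symmetric]
    proof (rule sum.cong[OF refl])
      fix A assume "A \<in> Pow T"
      hence AT: "A \<subseteq> T" by simp
      show "(-1::real) ^ card (insert a T - A) * F A + (-1) ^ card (insert a T - insert a A) * F (insert a A)
         = (-1) ^ card (T - A) * (F (insert a A) - F A)"
        unfolding c1[OF AT] c2[OF AT] by (simp add: algebra_simps)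
    qed
  qed
  have "(\<Sum>T\<in>Pow (insert a C). \<Sum>A\<in>Pow T. (-1::real) ^ card (T - A) * F A)
      = F C + (\<Sum>T\<in>Pow C. \<Sum>A\<in>Pow T. (-1::real) ^ card (T - A) * (F (insert a A) - F A))"
  proof -
    have e: "(\<Sum>T\<in>Pow C. \<Sum>A\<in>Pow (insert a T). (-1::real) ^ card (insert a T - A) * F A)
       = (\<Sum>T\<in>Pow C. \<Sum>A\<in>Pow T. (-1::real) ^ card (T - A) * (F (insert a A) - F A))"
      by (rule sum.cong[OF refl]) (simp add: step)
    show ?thesis unfolding sum_Pow_insert[OF insert(1,2)] insert(3) e ..
  qed
  also have "\<dots> = F (insert a C)"
  proof -
    have "(\<Sum>T\<in>Pow C. \<Sum>A\<in>Pow T. (-1::real) ^ card (T - A) * (F (insert a A) - F A)) = F (insert a C) - F C"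
      by (rule insert.IH[where F="\<lambda>A. F (insert a A) - F A", simplified])
    thus ?thesis by simp
  qed
  finally show ?case .
qed

lemma prod_ind:
  assumes "finite T"
  shows "(\<Prod>j\<in>T. if x j then 1 else (0::real)) = (if T \<subseteq> {j. x j} then 1 else 0)"
proof (cases "T \<subseteq> {j. x j}")
  case True
  have "(\<Prod>j\<in>T. if x j then 1 else (0::real)) = (\<Prod>j\<in>T. 1)"
    using True by (intro prod.cong) auto
  thus ?thesis by (simp only: if_P[OF True] prod.neutral_const)
next
  case False
  then obtain j where "j \<in> T" "\<not> x j" by auto
  hence "\<exists>a\<in>T. (if x a then 1 else (0::real)) = 0" by auto
  hence "(\<Prod>j\<in>T. if x j then 1 else (0::real)) = 0" by (rule prod_zero[OF assms])
  then show ?thesis by (simp only: if_not_P[OF False])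
qed

lemma cube_eq:
  assumes "x \<in> cube n" "y \<in> cube n" "\<And>k. k \<in> {1..n} \<Longrightarrow> x k = y k"
  shows "x = y"
proof
  fix k show "x k = y k"
  proof (cases "k \<in> {1..n}")
    case True then show ?thesis using assms(3) by blast
  next
    case False
    have "\<not> x k" using assms(1) False unfolding cube_def by blast
    moreover have "\<not> y k" using assms(2) False unfolding cube_def by blast
    ultimately show ?thesis by blast
  qed
qed

lemma dep_lt:
  assumes D: "D \<subseteq> cube n" and i: "i \<in> {1..n}"
    and J: "\<forall>x\<in>D. \<forall>y\<in>D. (\<forall>k. k \<noteq> i \<longrightarrow> x k = y k) \<longrightarrow> f x = f y"
  shows "dep_bits n D f < n"
proof -
  define S where "S = {1..n} - {i}"
  define F where "F A = (if \<exists>z\<in>D. S \<inter> {j. z j} = A \<and> f z then 1 else (0::real))" for A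
  define G where "G T = (\<Sum>A\<in>Pow T. (-1::real) ^ card (T - A) * F A)" for T
  define c where "c T = (if T \<subseteq> S then G T else 0)" for T
  have finS: "finite S" by (simp add: S_def)
  have rep: "represents n D f c"
    unfolding represents_def
  proof
    fix x assume xD: "x \<in> D"
    let ?X = "S \<inter> {j. x j}"
    have "peval n c x = (\<Sum>T\<in>Pow ?X. G T)"
      unfolding peval_def
    proof (rule sum.mono_neutral_cong_right)
      show "finite (Pow {1..n})" by simp
      show "Pow ?X \<subseteq> Pow {1..n}" by (auto simp: S_def)
      show "\<forall>T\<in>Pow {1..n} - Pow ?X. c T * (\<Prod>j\<in>T. if x j then 1 else 0) = 0"
      proof
        fix T assume "T \<in> Pow {1..n} - Pow ?X"
        hence "finite T" "\<not> T \<subseteq> S \<or> \<not> T \<subseteq> {j. x j}" by (auto intro: finite_subset)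
        thus "c T * (\<Prod>j\<in>T. if x j then 1 else 0) = 0" by (auto simp: c_def prod_ind)
      qed
      show "c T * (\<Prod>j\<in>T. if x j then 1 else 0) = G T" if "T \<in> Pow ?X" for T
      proof -
        have "finite T" using that finS by (auto intro: finite_subset)
        thus ?thesis using that by (auto simp: c_def prod_ind)
      qed
    qed
    also have "\<dots> = F ?X" unfolding G_def by (rule mobius) (simp add: finS)
    also have "\<dots> = (if f x then 1 else 0)"
    proof (cases "f x")
      case True then show ?thesis using xD by (auto simp: F_def)
    next
      case False
      have "\<not> (S \<inter> {j. z j} = ?X \<and> f z)" if zD: "z \<in> D" for z
      proof
        assume h: "S \<inter> {j. z j} = ?X \<and> f z"
        have "\<forall>k. k \<noteq> i \<longrightarrow> z k = x k"
        proof (intro allI impI)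
          fix k assume "k \<noteq> i"
          show "z k = x k"
          proof (cases "k \<in> {1..n}")
            case True
            hence "k \<in> S" using \<open>k \<noteq> i\<close> by (simp add: S_def)
            then show ?thesis using h by blast
          next
            case False
            then show ?thesis using D zD xD unfolding cube_def by auto
          qed
        qed
        hence "f z = f x" using J zD xD by blast
        thus False using h False by simp
      qed
      then show ?thesis using False by (auto simp: F_def)
    qed
    finally show "peval n c x = (if f x then 1 else 0)" .
  qed
  have "pvars n c \<subseteq> S" unfolding pvars_def c_def by auto
  hence "card (pvars n c) \<le> card S" using finS by (simp add: card_mono)
  also have "card S = n - 1" using i by (simp add: S_def)
  finally have cle: "card (pvars n c) \<le> n - 1" .
  have "dep_bits n D f \<le> card (pvars n c)"
    unfolding dep_bits_def by (rule Least_le) (use rep in blast)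
  hence "dep_bits n D f \<le> n - 1" using cle by simp
  moreover have "n \<ge> 1" using i by simp
  ultimately show ?thesis by arith
qed




definition idm :: qop where "idm = (\<lambda>a b. if a = b then 1 else 0)"

lemma unitary_idm: assumes "finite I" shows "unitary_on I idm"
  unfolding unitary_on_def
proof (intro ballI)
  fix a b assume "a \<in> I" "b \<in> I"
  have "(\<Sum>k\<in>I. cnj (idm k a) * idm k b) = (\<Sum>k\<in>I. if k = a then (if a = b then 1 else 0) else 0)"
    unfolding idm_def by (intro sum.cong) auto
  also have "\<dots> = (if a = b then 1 else 0)" using assms \<open>a \<in> I\<close> by simp
  finally show "(\<Sum>k\<in>I. cnj (idm k a) * idm k b) = (if a = b then 1 else 0)" .
qed

lemma qapply_idm: assumes "finite I" "a \<in> I" shows "qapply I idm v a = v a"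
proof -
  have "qapply I idm v a = (\<Sum>b\<in>I. if a = b then v b else 0)"
    unfolding qapply_def idm_def by (intro sum.cong) auto
  thus ?thesis using assms by simp
qed

lemma final_idm:
  "qapply (qI n m) P (final_state n m psi0 idm idm x) =
   qapply (qI n m) P (\<lambda>a. complex_of_real (sg x (fst a)) * psi0 a)"
proof (rule qapply_cong)
  fix b assume b: "b \<in> qI n m"
  have "final_state n m psi0 idm idm x b = qapply (qI n m) (query_op x) (qapply (qI n m) idm psi0) b"
    unfolding final_state_def by (rule qapply_idm[OF finite_qI b])
  also have "\<dots> = complex_of_real (sg x (fst b)) * qapply (qI n m) idm psi0 b"
    by (rule query_apply[OF b finite_qI])
  also have "\<dots> = complex_of_real (sg x (fst b)) * psi0 b"
    by (simp add: qapply_idm[OF finite_qI b])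
  finally show "final_state n m psi0 idm idm x b = complex_of_real (sg x (fst b)) * psi0 b" .
qed

lemma qI11: "qI 1 1 = {(0,0),(1,0)}" by (auto simp: qI_def)
lemma qI21: "qI 2 1 = {(0,0),(1,0),(2,0)}" by (auto simp: qI_def)

definition rr :: complex where "rr = complex_of_real (sqrt (1/2))"

lemma rr_sq: "(cmod rr)\<^sup>2 = 1/2" by (simp add: rr_def)
lemma rr_mult: "rr * rr = 1/2"
  by (simp add: rr_def flip: of_real_mult)

definition psi1 :: qvec where "psi1 = (\<lambda>a. rr)"
definition P0a :: qop where "P0a = (\<lambda>a b. 1/2)"
definition P1a :: qop where "P1a = (\<lambda>a b. if fst a = fst b then 1/2 else -1/2)"

lemma pm1: "proj_meas (qI 1 1) P0a P1a"
  unfolding proj_meas_def projector_on_def qI11 P0a_def P1a_def by simp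

lemma n1_norm: "qnorm2 (qI 1 1) psi1 = 1"
  unfolding qnorm2_def qI11 psi1_def by (simp add: rr_sq)

lemma n1_ok:
  "qnorm2 (qI 1 1) (qapply (qI 1 1) (if x 1 then P1a else P0a)
      (\<lambda>a. complex_of_real (sg x (fst a)) * psi1 a)) = 1"
  unfolding qnorm2_def qapply_def qI11
  by (cases "x 1") (simp_all add: P0a_def P1a_def psi1_def sg_def rr_sq)

definition psi2 :: qvec where "psi2 = (\<lambda>a. if fst a = 0 then 0 else rr)"
definition P1b :: qop where
  "P1b = (\<lambda>a b. if fst a = 0 \<or> fst b = 0 then 0 else if fst a = fst b then 1/2 else -1/2)"
definition P0b :: qop where "P0b = (\<lambda>a b. (if fst a = fst b then 1 else 0) - P1b a b)"

lemma pm2: "proj_meas (qI 2 1) P0b P1b"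
  unfolding proj_meas_def projector_on_def qI21 P0b_def P1b_def by simp

lemma n2_norm: "qnorm2 (qI 2 1) psi2 = 1"
  unfolding qnorm2_def qI21 psi2_def by (simp add: rr_sq)

lemma n2_ok:
  "qnorm2 (qI 2 1) (qapply (qI 2 1) (if x 1 \<noteq> x 2 then P1b else P0b)
      (\<lambda>a. complex_of_real (sg x (fst a)) * psi2 a)) = 1"
  unfolding qnorm2_def qapply_def qI21
  by (cases "x 1"; cases "x 2")
     (simp_all add: P0b_def P1b_def psi2_def sg_def rr_sq)




lemma half:
  fixes q :: "nat \<Rightarrow> real"
  assumes xy: "x \<noteq> y" and i: "i \<in> {1..n}" and agree: "\<forall>k. k \<noteq> i \<longrightarrow> x k = y k"
    and s1: "(\<Sum>k=0..n. q k) = 1" and s0: "(\<Sum>k=0..n. sg x k * sg y k * q k) = 0"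
  shows "q i = 1/2"
proof -
  have xi: "x i \<noteq> y i"
  proof
    assume "x i = y i"
    hence "x = y" using agree by (intro ext) (metis)
    thus False using xy by simp
  qed
  have sgk: "sg x k * sg y k = (if k = i then -1 else 1)" for k
    using xi agree i by (cases "k = i") (auto simp: sg_def)
  have "(\<Sum>k=0..n. sg x k * sg y k * q k) = (\<Sum>k=0..n. q k - (if k = i then 2 * q k else 0))"
    by (intro sum.cong refl) (simp add: sgk)
  also have "\<dots> = (\<Sum>k=0..n. q k) - 2 * q i"
    using i by (simp add: sum_subtractf)
  finally show ?thesis using s0 s1 by simp
qed

theorem theorem2:
  fixes n :: nat and D :: "(nat \<Rightarrow> bool) set" and f :: "(nat \<Rightarrow> bool) \<Rightarrow> bool"
  assumes "n \<ge> 1"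
    and "D \<subseteq> cube n"
    and "dep_bits n D f = n"
  shows "computes_exactly_1query n D f \<longleftrightarrow>
     ((n = 1 \<and> D = cube 1 \<and>
        ((\<forall>x\<in>D. f x = x 1) \<or> (\<forall>x\<in>D. f x = (\<not> x 1)))) \<or>
      (n = 2 \<and> card D \<in> {3, 4} \<and>
        ((\<forall>x\<in>D. f x = (x 1 \<noteq> x 2)) \<or> (\<forall>x\<in>D. f x = (x 1 = x 2)))))"
proof
  assume C: "computes_exactly_1query n D f"
  obtain q where q0: "\<forall>i. 0 \<le> q i" and qs: "(\<Sum>i=0..n. q i) = 1"
    and qp: "\<forall>x\<in>D. \<forall>y\<in>D. f x \<noteq> f y \<longrightarrow> (\<Sum>i=0..n. sg x i * sg y i * q i) = 0"
    using weights[OF C] by blast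
  have sens: "\<exists>x\<in>D. \<exists>y\<in>D. f x \<noteq> f y \<and> (\<forall>k. k \<noteq> i \<longrightarrow> x k = y k)" if i: "i \<in> {1..n}" for i
  proof (rule ccontr)
    assume "\<not> ?thesis"
    hence "dep_bits n D f < n" using dep_lt[OF assms(2) i] by blast
    thus False using assms(3) by simp
  qed
  have qh: "q i = 1/2" if i: "i \<in> {1..n}" for i
  proof -
    obtain x y where xy: "x \<in> D" "y \<in> D" "f x \<noteq> f y" "\<forall>k. k \<noteq> i \<longrightarrow> x k = y k"
      using sens[OF i] by blast
    have ne: "x \<noteq> y" using xy(3) by auto
    have s0: "(\<Sum>k=0..n. sg x k * sg y k * q k) = 0" using qp xy(1,2,3) by blast
    show ?thesis by (rule half[OF ne i xy(4) qs s0])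
  qed
  have "(\<Sum>i=0..n. q i) = q 0 + (\<Sum>i=1..n. q i)" by (simp add: sum.atLeast_Suc_atMost)
  also have "(\<Sum>i=1..n. q i) = (\<Sum>i=1..n. 1/2)" using qh by (intro sum.cong) auto
  also have "\<dots> = real n / 2" by simp
  finally have "q 0 + real n / 2 = 1" using qs by simp
  moreover have "q 0 \<ge> 0" using q0 by simp
  ultimately have "real n \<le> 2" by linarith
  hence "n \<le> 2" by simp
  hence n12: "n = 1 \<or> n = 2" using assms(1) by auto
  have D1: "x \<in> cube n" if "x \<in> D" for x using that assms(2) by blast
  show "((n = 1 \<and> D = cube 1 \<and>
        ((\<forall>x\<in>D. f x = x 1) \<or> (\<forall>x\<in>D. f x = (\<not> x 1)))) \<or>
      (n = 2 \<and> card D \<in> {3, 4} \<and>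
        ((\<forall>x\<in>D. f x = (x 1 \<noteq> x 2)) \<or> (\<forall>x\<in>D. f x = (x 1 = x 2)))))"
  proof (cases "n = 1")
    case True
    obtain x y where xy: "x \<in> D" "y \<in> D" "f x \<noteq> f y" "\<forall>k. k \<noteq> 1 \<longrightarrow> x k = y k"
      using sens[of 1] True by auto
    have x1: "x 1 \<noteq> y 1"
    proof
      assume "x 1 = y 1"
      hence "x = y" using xy(4) by (intro ext) metis
      thus False using xy(3) by simp
    qed
    have D1': "w \<in> cube 1" if "w \<in> D" for w using D1[OF that] True by simp
    have zxy: "z = x \<or> z = y" if "z \<in> cube 1" for z
    proof (cases "z 1 = x 1")
      case True
      then have "z = x" using cube_eq[OF that D1'[OF xy(1)]] by auto
      then show ?thesis ..
    next
      case False
      then have "z 1 = y 1" using x1 by blast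
      then have "z = y" using cube_eq[OF that D1'[OF xy(2)]] by auto
      then show ?thesis ..
    qed
    have Dc: "D = cube 1"
    proof (rule equalityI)
      show "D \<subseteq> cube 1" using assms(2) True by simp
      show "cube 1 \<subseteq> D" using zxy xy(1,2) by blast
    qed
    have zD: "z = x \<or> z = y" if "z \<in> D" for z using zxy Dc that by blast
    have ff: "(\<forall>z\<in>D. f z = z 1) \<or> (\<forall>z\<in>D. f z = (\<not> z 1))"
    proof (cases "f x = x 1")
      case True
      have "f y = y 1" using True xy(3) x1 by auto
      hence "\<forall>z\<in>D. f z = z 1" using zD True by auto
      then show ?thesis ..
    next
      case False
      have "f y = (\<not> y 1)" using False xy(3) x1 by auto
      hence "\<forall>z\<in>D. f z = (\<not> z 1)" using zD False by auto
      then show ?thesis ..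
    qed
    show ?thesis by (intro disjI1 conjI True Dc ff)
  next
    case False
    hence n2: "n = 2" using n12 by simp
    have q12: "q 1 = 1/2" "q 2 = 1/2" using qh n2 by auto
    have e3: "{0..2::nat} = {0,1,2}" by auto
    have "q 0 = 0" using qs q12 n2 by (simp add: e3)
    have par: "(x 1 \<noteq> x 2) \<noteq> (y 1 \<noteq> y 2)" if "x \<in> D" "y \<in> D" "f x \<noteq> f y" for x y
    proof -
      have "(\<Sum>i=0..2. sg x i * sg y i * q i) = 0" using qp that n2 by simp
      thus ?thesis using \<open>q 0 = 0\<close> q12 by (simp add: e3 sg_def split: if_splits)
    qed
    obtain a b where ab: "a \<in> D" "b \<in> D" "f a \<noteq> f b" "\<forall>k. k \<noteq> 1 \<longrightarrow> a k = b k"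
      using sens[of 1] n2 by auto
    obtain c d where cd: "c \<in> D" "d \<in> D" "f c \<noteq> f d" "\<forall>k. k \<noteq> 2 \<longrightarrow> c k = d k"
      using sens[of 2] n2 by auto
    have fz: "f z = (f a = ((z 1 \<noteq> z 2) = (a 1 \<noteq> a 2)))" if "z \<in> D" for z
    proof -
      have h1: "f z \<noteq> f a \<Longrightarrow> (z 1 \<noteq> z 2) \<noteq> (a 1 \<noteq> a 2)" using par[OF that ab(1)] by blast
      have h2: "f z \<noteq> f b \<Longrightarrow> (z 1 \<noteq> z 2) \<noteq> (b 1 \<noteq> b 2)" using par[OF that ab(2)] by blast
      have h3: "(a 1 \<noteq> a 2) \<noteq> (b 1 \<noteq> b 2)" using par[OF ab(1) ab(2) ab(3)] .
      show ?thesis using h1 h2 h3 ab(3) by (cases "f z"; cases "f a"; cases "f b") auto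
    qed
    have fpar: "(\<forall>x\<in>D. f x = (x 1 \<noteq> x 2)) \<or> (\<forall>x\<in>D. f x = (x 1 = x 2))"
      using fz by (cases "f a = (a 1 \<noteq> a 2)") auto
    define g where "g = (\<lambda>(p::bool, r::bool). (\<lambda>i::nat. (i = 1 \<and> p) \<or> (i = 2 \<and> r)))"
    have sub: "cube 2 \<subseteq> g ` {(True,True),(True,False),(False,True),(False,False)}"
    proof
      fix z assume z: "z \<in> cube 2"
      have "z = g (z 1, z 2)"
      proof
        fix k show "z k = g (z 1, z 2) k"
          using z unfolding g_def cube_def
          by (cases "k = 1"; cases "k = 2") auto
      qed
      thus "z \<in> g ` {(True,True),(True,False),(False,True),(False,False)}"
        by (cases "z 1"; cases "z 2") auto
    qed
    have Dsub: "D \<subseteq> g ` {(True,True),(True,False),(False,True),(False,False)}"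
      using assms(2) n2 sub by simp
    have finD: "finite D" by (rule finite_subset[OF Dsub]) simp
    have "card D \<le> card (g ` {(True,True),(True,False),(False,True),(False,False)})"
      using assms(2) n2 sub by (intro card_mono) auto
    also have "\<dots> \<le> card {(True,True),(True,False),(False,True),(False,False)}"
      by (rule card_image_le) simp
    also have "\<dots> = 4" by simp
    finally have c4: "card D \<le> 4" .
    have a1: "a 1 \<noteq> b 1"
    proof
      assume "a 1 = b 1"
      hence "a = b" using ab(4) by (intro ext) metis
      thus False using ab(3) by simp
    qed
    have c2: "c 2 \<noteq> d 2"
    proof
      assume "c 2 = d 2"
      hence "c = d" using cd(4) by (intro ext) metis
      thus False using cd(3) by simp
    qed
    have "a \<noteq> b" using a1 by auto
    have "\<exists>e\<in>D. e \<noteq> a \<and> e \<noteq> b"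
    proof (cases "c \<noteq> a \<and> c \<noteq> b")
      case True then show ?thesis using cd(1) by blast
    next
      case False
      have "d \<noteq> a \<and> d \<noteq> b"
      proof
        show "d \<noteq> a"
        proof
          assume da: "d = a"
          have "c \<noteq> a" using c2 da by auto
          hence cb: "c = b" using False by blast
          have "a 1 = b 1" using cd(4) da cb by auto
          thus False using a1 by simp
        qed
        show "d \<noteq> b"
        proof
          assume db: "d = b"
          have "c \<noteq> b" using c2 db by auto
          hence ca: "c = a" using False by blast
          have "a 1 = b 1" using cd(4) db ca by auto
          thus False using a1 by simp
        qed
      qed
      then show ?thesis using cd(2) by blast
    qed
    then obtain e where e: "e \<in> D" "e \<noteq> a" "e \<noteq> b" by blast
    have "card {a, b, e} \<le> card D" using ab(1,2) e(1) finD by (intro card_mono) auto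
    moreover have "card {a, b, e} = 3" using \<open>a \<noteq> b\<close> e by simp
    ultimately have "card D \<ge> 3" by simp
    hence cD: "card D \<in> {3, 4}" using c4 by auto
    show ?thesis by (intro disjI2 conjI n2 cD fpar)
  qed
next
  assume R: "((n = 1 \<and> D = cube 1 \<and>
        ((\<forall>x\<in>D. f x = x 1) \<or> (\<forall>x\<in>D. f x = (\<not> x 1)))) \<or>
      (n = 2 \<and> card D \<in> {3, 4} \<and>
        ((\<forall>x\<in>D. f x = (x 1 \<noteq> x 2)) \<or> (\<forall>x\<in>D. f x = (x 1 = x 2)))))"
  show "computes_exactly_1query n D f"
  proof (cases "n = 1")
    case True
    have ui: "unitary_on (qI 1 1) idm" by (rule unitary_idm[OF finite_qI])
    have okx: "\<And>x. qnorm2 (qI 1 1) (qapply (qI 1 1) (if x 1 then P1a else P0a)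
        (final_state 1 1 psi1 idm idm x)) = 1"
      by (simp only: final_idm n1_ok)
    have pm1': "proj_meas (qI 1 1) P1a P0a"
      using pm1 unfolding proj_meas_def by (simp add: add.commute)
    from R True have "(\<forall>x\<in>D. f x = x 1) \<or> (\<forall>x\<in>D. f x = (\<not> x 1))" by auto
    then show ?thesis
    proof
      assume h: "\<forall>x\<in>D. f x = x 1"
      show ?thesis unfolding computes_exactly_1query_def True
        apply (rule exI[of _ 1], rule exI[of _ psi1], rule exI[of _ idm], rule exI[of _ idm],
               rule exI[of _ P0a], rule exI[of _ P1a])
        using n1_norm ui pm1 okx h by simp
    next
      assume h: "\<forall>x\<in>D. f x = (\<not> x 1)"
      show ?thesis unfolding computes_exactly_1query_def True
        apply (rule exI[of _ 1], rule exI[of _ psi1], rule exI[of _ idm], rule exI[of _ idm],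
               rule exI[of _ P1a], rule exI[of _ P0a])
      proof (intro conjI ballI)
        fix x assume "x \<in> D"
        have "(if f x then P0a else P1a) = (if x 1 then P1a else P0a)" using h \<open>x \<in> D\<close> by simp
        thus "qnorm2 (qI 1 1) (qapply (qI 1 1) (if f x then P0a else P1a) (final_state 1 1 psi1 idm idm x)) = 1"
          using okx by simp
      qed (use n1_norm ui pm1' in simp_all)
    qed
  next
    case False
    hence n2: "n = 2" using R by auto
    have ui: "unitary_on (qI 2 1) idm" by (rule unitary_idm[OF finite_qI])
    have okx: "\<And>x. qnorm2 (qI 2 1) (qapply (qI 2 1) (if x 1 \<noteq> x 2 then P1b else P0b)
        (final_state 2 1 psi2 idm idm x)) = 1"
      by (simp only: final_idm n2_ok)
    have pm2': "proj_meas (qI 2 1) P1b P0b"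
      using pm2 unfolding proj_meas_def by (simp add: add.commute)
    from R n2 have "(\<forall>x\<in>D. f x = (x 1 \<noteq> x 2)) \<or> (\<forall>x\<in>D. f x = (x 1 = x 2))" by auto
    then show ?thesis
    proof
      assume h: "\<forall>x\<in>D. f x = (x 1 \<noteq> x 2)"
      show ?thesis unfolding computes_exactly_1query_def n2
        apply (rule exI[of _ 1], rule exI[of _ psi2], rule exI[of _ idm], rule exI[of _ idm],
               rule exI[of _ P0b], rule exI[of _ P1b])
        using n2_norm ui pm2 okx h by simp
    next
      assume h: "\<forall>x\<in>D. f x = (x 1 = x 2)"
      show ?thesis unfolding computes_exactly_1query_def n2
        apply (rule exI[of _ 1], rule exI[of _ psi2], rule exI[of _ idm], rule exI[of _ idm],
               rule exI[of _ P1b], rule exI[of _ P0b])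
      proof (intro conjI ballI)
        fix x assume "x \<in> D"
        have "(if f x then P0b else P1b) = (if x 1 \<noteq> x 2 then P1b else P0b)" using h \<open>x \<in> D\<close> by simp
        thus "qnorm2 (qI 2 1) (qapply (qI 2 1) (if f x then P0b else P1b) (final_state 2 1 psi2 idm idm x)) = 1"
          using okx by simp
      qed (use n2_norm ui pm2' in simp_all)
    qed
  qed
qed


end
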